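(* Let $\mathcal{A}=(Q,q_0,\Delta,F)$ be a probabilistic automaton and $\mathcal{G}$ a set of limit-words. Then: (i) if $\mathcal{G}$ is consistent with $\mathcal{A}$ and contains a value $1$ witness, then $\mathrm{val}(\mathcal{A})=1$; (ii) if $\mathcal{G}$ is complete for $\mathcal{A}$ and $\mathrm{val}(\mathcal{A})=1$, then $\mathcal{G}$ contains a value $1$ witness. In particular, if $\mathcal{G}$ is both consistent with and complete for $\mathcal{A}$, then $\mathrm{val}(\mathcal{A})=1$ if and only if $\mathcal{G}$ contains a value $1$ witness.
   Context: Fix a finite alphabet $A$. A probabilistic automaton is $\mathcal{A}=(Q,q_0,\Delta,F)$ with $Q$ finite, initial state $q_0$, accepting states $F\subseteq Q$, and $\Delta: Q\times A\to\mathcal{D}(Q)$. For $a\in A$ let $M_a(s,t)=\Delta(s,a)(t)$, for $u=a_0\cdots a_{n-1}$ let $M_u=M_{a_0}\cdots M_{a_{n-1}}$ (identity for the empty word), and $\mathbb{P}_{\mathcal{A}}(s\xrightarrow{u}t)=M_u(s,t)$. $\mathbb{P}_{\mathcal{A}}(u)=\sum_{t\in F}\mathbb{P}_{\mathcal{A}}(q_0\xrightarrow{u}t)$ and $\mathrm{val}(\mathcal{A})=\sup_{u\in A^*}\mathbb{P}_{\mathcal{A}}(u)$. A limit-word is a map $\mathbf{u}:Q\times Q\to\{0,1\}$ such that every $s$ has some $t$ with $\mathbf{u}(s,t)=1$. A sequence of words $(u_n)$ reifies $\mathbf{u}$ if for all $s,t$, $\mathbb{P}_{\mathcal{A}}(s\xrightarrow{u_n}t)$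 converges and $\mathbf{u}(s,t)=1\iff\lim_n\mathbb{P}_{\mathcal{A}}(s\xrightarrow{u_n}t)>0$. A set $\mathcal{G}$ of limit-words is consistent with $\mathcal{A}$ if every $\mathbf{u}\in\mathcal{G}$ is reified by some sequence of words. $\mathcal{G}$ is complete for $\mathcal{A}$ if for every sequence of words $(u_n)_{n\in\mathbb{N}}$ there exists $\mathbf{u}\in\mathcal{G}$ such that for all $s,t$: $\limsup_n\mathbb{P}_{\mathcal{A}}(s\xrightarrow{u_n}t)=0\Rightarrow\mathbf{u}(s,t)=0$. A value $1$ witness is a limit-word $\mathbf{u}$ such that for all states $t$, $\mathbf{u}(q_0,t)=1$ implies $t\in F$. *)

theory Defs
  imports "HOL-Analysis.Analysis" "HOL-Probability.Probability_Mass_Function"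
begin

text \<open>A probabilistic automaton over a finite alphabet 'a with finite state type 'q
  is given by an initial state q0, a transition function Delta and accepting states F.
  M_a(s,t) = pmf (Delta s a) t.\<close>

fun path_prob :: "('q::finite \<Rightarrow> 'a \<Rightarrow> 'q pmf) \<Rightarrow> 'a list \<Rightarrow> 'q \<Rightarrow> 'q \<Rightarrow> real" where
  "path_prob Delta [] s t = (if s = t then 1 else 0)"
| "path_prob Delta (a # u) s t = (\<Sum>r\<in>UNIV. pmf (Delta s a) r * path_prob Delta u r t)"

definition acc_prob :: "'q::finite \<Rightarrow> ('q \<Rightarrow> 'a \<Rightarrow> 'q pmf) \<Rightarrow> 'q set \<Rightarrow> 'a list \<Rightarrow> real" where
  "acc_prob q0 Delta F u = (\<Sum>t\<in>F. path_prob Delta u q0 t)"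

definition val :: "'q::finite \<Rightarrow> ('q \<Rightarrow> 'a \<Rightarrow> 'q pmf) \<Rightarrow> 'q set \<Rightarrow> real" where
  "val q0 Delta F = (SUP u\<in>(UNIV :: 'a list set). acc_prob q0 Delta F u)"

type_synonym 'q limit_word = "'q \<Rightarrow> 'q \<Rightarrow> bool"

definition is_limit_word :: "'q limit_word \<Rightarrow> bool" where
  "is_limit_word w \<longleftrightarrow> (\<forall>s. \<exists>t. w s t)"

definition reifies :: "('q::finite \<Rightarrow> 'a \<Rightarrow> 'q pmf) \<Rightarrow> (nat \<Rightarrow> 'a list) \<Rightarrow> 'q limit_word \<Rightarrow> bool" where
  "reifies Delta us w \<longleftrightarrow>
     (\<forall>s t. convergent (\<lambda>n. path_prob Delta (us n) s t) \<and>
            (w s t \<longleftrightarrow> lim (\<lambda>n. path_prob Delta (us n) s t) > 0))"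

definition consistent :: "('q::finite \<Rightarrow> 'a \<Rightarrow> 'q pmf) \<Rightarrow> 'q limit_word set \<Rightarrow> bool" where
  "consistent Delta G \<longleftrightarrow> (\<forall>w\<in>G. \<exists>us. reifies Delta us w)"

definition complete :: "('q::finite \<Rightarrow> 'a \<Rightarrow> 'q pmf) \<Rightarrow> 'q limit_word set \<Rightarrow> bool" where
  "complete Delta G \<longleftrightarrow>
     (\<forall>us :: nat \<Rightarrow> 'a list. \<exists>w\<in>G. \<forall>s t.
        limsup (\<lambda>n. ereal (path_prob Delta (us n) s t)) = 0 \<longrightarrow> \<not> w s t)"

definition value1_witness :: "'q \<Rightarrow> 'q set \<Rightarrow> 'q limit_word \<Rightarrow> bool" where
  "value1_witness q0 F w \<longleftrightarrow> is_limit_word w \<and> (\<forall>t. w q0 t \<longrightarrow> t \<in> F)"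

end

theory Submission
  imports Defs
begin

lemma pp_nonneg: "path_prob Delta u s t \<ge> 0"
  by (induction u arbitrary: s) (auto intro!: sum_nonneg mult_nonneg_nonneg)

lemma pp_sum: "(\<Sum>t\<in>UNIV. path_prob (Delta::'q::finite \<Rightarrow> 'a \<Rightarrow> 'q pmf) u s t) = 1"
proof (induction u arbitrary: s)
  case Nil
  then show ?case by simp
next
  case (Cons a u)
  have "(\<Sum>t\<in>UNIV. path_prob Delta (a#u) s t)
      = (\<Sum>r\<in>UNIV. pmf (Delta s a) r * (\<Sum>t\<in>UNIV. path_prob Delta u r t))"
    unfolding path_prob.simps sum_distrib_left by (rule sum.swap)
  also have "\<dots> = (\<Sum>r\<in>UNIV. pmf (Delta s a) r)" using Cons by simp
  also have "\<dots> = 1" by (rule sum_pmf_eq_1) auto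
  finally show ?case .
qed

lemma acc_compl: "acc_prob q0 (Delta::'q::finite \<Rightarrow> 'a \<Rightarrow> 'q pmf) F u
   = 1 - (\<Sum>t\<in>-F. path_prob Delta u q0 t)"
proof -
  have "(\<Sum>t\<in>UNIV. path_prob Delta u q0 t) = (\<Sum>t\<in>F. path_prob Delta u q0 t) + (\<Sum>t\<in>-F. path_prob Delta u q0 t)"
    by (subst sum.union_disjoint[symmetric]) (auto intro: arg_cong[where f="\<lambda>A. sum _ A"])
  then show ?thesis using pp_sum[of Delta u q0] by (simp add: acc_prob_def)
qed

lemma acc_le1: "acc_prob q0 (Delta::'q::finite \<Rightarrow> 'a \<Rightarrow> 'q pmf) F u \<le> 1"
  using acc_compl[of q0 Delta F u] sum_nonneg[of "-F" "\<lambda>t. path_prob Delta u q0 t"] pp_nonneg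
  by auto

lemma pp_le_compl: "t \<notin> F \<Longrightarrow> path_prob (Delta::'q::finite \<Rightarrow> 'a \<Rightarrow> 'q pmf) u q0 t \<le> 1 - acc_prob q0 Delta F u"
  unfolding acc_compl
  by (simp, rule member_le_sum) (auto intro: pp_nonneg)

lemma bdd: "bdd_above (range (acc_prob q0 (Delta::'q::finite \<Rightarrow> 'a \<Rightarrow> 'q pmf) F))"
  by (rule bdd_aboveI2[where M=1]) (rule acc_le1)

lemma val_le1: "val q0 (Delta::'q::finite \<Rightarrow> 'a \<Rightarrow> 'q pmf) F \<le> 1"
  unfolding val_def by (rule cSUP_least) (auto simp: acc_le1)

lemma part1:
  assumes "consistent (Delta::'q::finite \<Rightarrow> 'a \<Rightarrow> 'q pmf) G" "w \<in> G" "value1_witness q0 F w"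
  shows "val q0 Delta F = 1"
proof -
  obtain us where r: "reifies Delta us w" using assms unfolding consistent_def by blast
  have z: "(\<lambda>n. path_prob Delta (us n) q0 t) \<longlonglongrightarrow> 0" if "t \<in> -F" for t
  proof -
    have c: "convergent (\<lambda>n. path_prob Delta (us n) q0 t)" and nw: "\<not> w q0 t"
      using r that assms(3) unfolding reifies_def value1_witness_def by auto
    hence L: "(\<lambda>n. path_prob Delta (us n) q0 t) \<longlonglongrightarrow> lim (\<lambda>n. path_prob Delta (us n) q0 t)"
      by (simp add: convergent_LIMSEQ_iff)
    have "lim (\<lambda>n. path_prob Delta (us n) q0 t) \<ge> 0"
      by (rule LIMSEQ_le_const[OF L]) (auto intro: pp_nonneg)
    moreover have "\<not> lim (\<lambda>n. path_prob Delta (us n) q0 t) > 0"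
      using r nw unfolding reifies_def by blast
    ultimately show ?thesis using L by auto
  qed
  have "(\<lambda>n. \<Sum>t\<in>-F. path_prob Delta (us n) q0 t) \<longlonglongrightarrow> (\<Sum>t\<in>-F. 0)"
    by (rule tendsto_sum) (use z in auto)
  hence "(\<lambda>n. acc_prob q0 Delta F (us n)) \<longlonglongrightarrow> 1 - 0"
    unfolding acc_compl by (intro tendsto_diff) auto
  moreover have "\<And>n. acc_prob q0 Delta F (us n) \<le> val q0 Delta F"
    unfolding val_def by (rule cSUP_upper[OF _ bdd]) simp
  ultimately have "1 - 0 \<le> val q0 Delta F"
    by (intro LIMSEQ_le_const2) auto
  with val_le1[of q0 Delta F] show ?thesis by simp
qed

lemma part2:
  assumes "complete (Delta::'q::finite \<Rightarrow> 'a \<Rightarrow> 'q pmf) G" "val q0 Delta F = 1"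
    "\<forall>w\<in>G. is_limit_word w"
  shows "\<exists>w\<in>G. value1_witness q0 F w"
proof -
  have "\<forall>n::nat. \<exists>u. 1 - 1/(real n + 1) < acc_prob q0 Delta F u"
  proof
    fix n :: nat
    have "1 - 1/(real n + 1) < val q0 Delta F" using assms(2) by simp
    thus "\<exists>u. 1 - 1/(real n + 1) < acc_prob q0 Delta F u"
      unfolding val_def by (subst (asm) less_cSUP_iff[OF _ bdd]) auto
  qed
  then obtain us where us: "\<And>n. 1 - 1/(real n + 1) < acc_prob q0 Delta F (us n)" by metis
  obtain w where w: "w \<in> G" and wp: "\<And>s t. limsup (\<lambda>n. ereal (path_prob Delta (us n) s t)) = 0 \<longrightarrow> \<not> w s t"
    using assms(1) unfolding complete_def by blast
  have "w q0 t \<longrightarrow> t \<in> F" for t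
  proof (rule impI, rule ccontr)
    assume "w q0 t" "t \<notin> F"
    have "(\<lambda>n. path_prob Delta (us n) q0 t) \<longlonglongrightarrow> 0"
    proof (rule tendsto_sandwich[where f="\<lambda>_. 0" and h="\<lambda>n. 1/(real n + 1)"])
      show "\<forall>\<^sub>F n in sequentially. 0 \<le> path_prob Delta (us n) q0 t" by (simp add: pp_nonneg)
      show "\<forall>\<^sub>F n in sequentially. path_prob Delta (us n) q0 t \<le> 1/(real n + 1)"
        using pp_le_compl[OF \<open>t \<notin> F\<close>, of Delta _ q0] us
        by (auto intro!: always_eventually) (smt (verit))
      show "(\<lambda>n. 1 / (real n + 1)) \<longlonglongrightarrow> 0" using LIMSEQ_inverse_real_of_nat by (simp add: inverse_eq_divide add.commute)
    qed simp
    hence "(\<lambda>n. ereal (path_prob Delta (us n) q0 t)) \<longlonglongrightarrow> ereal 0" by (rule tendsto_ereal)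
    hence "limsup (\<lambda>n. ereal (path_prob Delta (us n) q0 t)) = 0"
      using lim_imp_Limsup[of sequentially] zero_ereal_def by (metis trivial_limit_sequentially)
    with wp \<open>w q0 t\<close> show False by blast
  qed
  with w assms(3) show ?thesis unfolding value1_witness_def by blast
qed

theorem lemma2p9:
  fixes q0 :: "'q::finite" and Delta :: "'q \<Rightarrow> 'a::finite \<Rightarrow> 'q pmf" and F :: "'q set"
    and G :: "'q limit_word set"
  assumes "\<forall>w\<in>G. is_limit_word w"
  shows "(consistent Delta G \<and> (\<exists>w\<in>G. value1_witness q0 F w) \<longrightarrow> val q0 Delta F = 1)
       \<and> (complete Delta G \<and> val q0 Delta F = 1 \<longrightarrow> (\<exists>w\<in>G. value1_witness q0 F w))
       \<and> (consistent Delta G \<and> complete Delta G \<longrightarrow>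
            (val q0 Delta F = 1 \<longleftrightarrow> (\<exists>w\<in>G. value1_witness q0 F w)))"
proof -
  have A: "consistent Delta G \<and> (\<exists>w\<in>G. value1_witness q0 F w) \<longrightarrow> val q0 Delta F = 1"
    using part1[of Delta G _ q0 F] by auto
  have B: "complete Delta G \<and> val q0 Delta F = 1 \<longrightarrow> (\<exists>w\<in>G. value1_witness q0 F w)"
    using part2[of Delta G q0 F, OF _ _ assms] by auto
  show ?thesis using A B by auto
qed

end
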